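(* Let $G$ be a compact group with Haar probability measure $\lambda$ and let $y\in G$. Let $\nu_y=s_y[\lambda]$ be the image of $\lambda$ under $s_y\colon G\to G\times G$, $s_y(x)=(x,x\oplus y)$. Then for every Borel rectangle $A\times B\subseteq G\times G$, $$\nu_y(A\times B)=\lim_{\mathcal E\in\mathcal B}\nu_{y,\mathcal E}(A\times B),$$ and consequently the net $\{\nu_{y,\mathcal E}\}_{\mathcal E\in\mathcal B}$ converges to $\nu_y$ in the weak$^\ast$ topology of $P(G\times G)$.
   Context: $G=(G,\oplus)$ is a compact Hausdorff group with Haar probability measure $\lambda$; $E\oplus y=\{e\oplus y:e\in E\}$. $\mathcal B$ is the set of all finite partitions of $G$ into Borel sets, directed by refinement ($\mathcal E_1\prec\mathcal E_2$ if $\mathcal E_2$ is finer than $\mathcal E_1$). For $\mathcal E\in\mathcal B$, $\mathcal E^\ast$ is the set of $E\in\mathcal E$ with $\lambda(E)>0$. $\lambda_2$ is the regular Borel extension of $\lambda\otimes\lambda$ on $G\times G$, and $\nu_{y,\mathcal E}(D)=\sum_{E\in\mathcal E^\ast}\lambda_2\big(D\cap(E\times(E\oplus y))\big)/\lambda(E)$ for Borel $D\subseteq G\times G$. $P(X)$ is the space of regular Borel probability measures on $X$ with the weak$^\ast$ topology (as a subset of $\mathcal C(X)^\ast$). The image measure is $g[\mu](A)=\mu(g^{-1}[A])$. *)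

theory Defs
  imports "HOL-Probability.Probability"
begin

text \<open>A compact Hausdorff group is modelled as a type of class topological_group_add
  (a possibly non-commutative group with continuous operations), t2_space, with UNIV compact.
  The group operation x \<oplus> y is written x + y.\<close>

definition regular_measure :: "'b::topological_space measure \<Rightarrow> bool" where
  "regular_measure M \<longleftrightarrow>
     (\<forall>A\<in>sets borel.
        emeasure M A = (INF U\<in>{U. open U \<and> A \<subseteq> U}. emeasure M U) \<and>
        emeasure M A = (SUP K\<in>{K. compact K \<and> K \<subseteq> A}. emeasure M K))"

definition haar_prob :: "'a::topological_group_add measure \<Rightarrow> bool" where
  "haar_prob M \<longleftrightarrow> sets M = sets borel \<and> prob_space M \<and> regular_measure M \<and>
     (\<forall>A\<in>sets borel. \<forall>x. emeasure M ((\<lambda>a. x + a) ` A) = emeasure M A)"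

definition rtrans :: "'a::plus set \<Rightarrow> 'a \<Rightarrow> 'a set" where
  "rtrans E y = (\<lambda>e. e + y) ` E"

definition borel_partitions :: "'a::topological_space set set set" where
  "borel_partitions = {P. finite P \<and> P \<subseteq> sets borel \<and> {} \<notin> P \<and> \<Union>P = UNIV \<and>
      (\<forall>E\<in>P. \<forall>F\<in>P. E \<noteq> F \<longrightarrow> E \<inter> F = {})}"

definition refines :: "'a set set \<Rightarrow> 'a set set \<Rightarrow> bool" where
  "refines Q P \<longleftrightarrow> (\<forall>F\<in>Q. \<exists>E\<in>P. F \<subseteq> E)"

text \<open>The filter of the net indexed by the directed set of partitions (tails of the net).\<close>
definition partition_net :: "'a::topological_space set set filter" where
  "partition_net = (INF P\<in>borel_partitions. principal {Q\<in>borel_partitions. refines Q P})"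

definition regular_product_extension :: "'a::topological_space measure \<Rightarrow> ('a \<times> 'a) measure \<Rightarrow> bool" where
  "regular_product_extension M L2 \<longleftrightarrow> sets L2 = sets borel \<and> finite_measure L2 \<and> regular_measure L2 \<and>
     (\<forall>A\<in>sets borel. \<forall>B\<in>sets borel. emeasure L2 (A \<times> B) = emeasure M A * emeasure M B)"

definition nu_part :: "'a::{topological_space,plus} measure \<Rightarrow> ('a \<times> 'a) measure \<Rightarrow> 'a \<Rightarrow> 'a set set \<Rightarrow> ('a \<times> 'a) measure" where
  "nu_part M L2 y P = measure_of UNIV (sets borel)
     (\<lambda>D. \<Sum>E\<in>{E\<in>P. emeasure M E > 0}. emeasure L2 (D \<inter> (E \<times> rtrans E y)) / emeasure M E)"

definition nu_diag :: "'a::{topological_space,plus} measure \<Rightarrow> 'a \<Rightarrow> ('a \<times> 'a) measure" where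
  "nu_diag M y = distr M borel (\<lambda>x. (x, x + y))"

end

theory Submission
  imports Defs
begin


lemma urysohn_cpt:
  fixes K U :: "'a::t2_space set"
  assumes "compact (UNIV::'a set)" "compact K" "open U" "K \<subseteq> U"
  obtains f :: "'a \<Rightarrow> real" where "continuous_on UNIV f" "\<And>x. 0 \<le> f x" "\<And>x. f x \<le> 1"
    "\<And>x. x \<in> K \<Longrightarrow> f x = 1" "\<And>x. x \<notin> U \<Longrightarrow> f x = 0"
proof -
  have N: "normal_space (euclidean :: 'a topology)"
    apply (rule compact_Hausdorff_or_regular_imp_normal_space)
    using assms(1) apply (simp add: compact_space_def)
    by (metis Hausdorff_space_def disjnt_def hausdorff open_openin)
  obtain f where f: "continuous_map euclidean (top_of_set {0..1::real}) f" "f ` (-U) \<subseteq> {0}" "f ` K \<subseteq> {1}"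
    apply (rule Urysohn_lemma[OF N, of "-U" K 0 1])
    using assms compact_imp_closed[OF assms(2)] by (auto simp: closed_def disjnt_def)
  have "continuous_on UNIV f"
    using f(1) by (metis continuous_map_in_subtopology continuous_map_iff_continuous subtopology_UNIV)
  moreover have "\<And>x. f x \<in> {0..1}" using f(1) by (auto simp: continuous_map_def)
  ultimately show ?thesis using f by (intro that) (force simp: image_subset_iff)+
qed



lemma haar_sets: "haar_prob lam \<Longrightarrow> sets lam = sets borel"
  by (simp add: haar_prob_def)
lemma haar_prob_space: "haar_prob lam \<Longrightarrow> prob_space lam"
  by (simp add: haar_prob_def)

lemma add_left_meas: "(\<lambda>x::'a::topological_group_add. c + x) \<in> borel_measurable borel"
  by (intro borel_measurable_continuous_onI continuous_intros)
lemma add_right_meas: "(\<lambda>x::'a::topological_group_add. x + c) \<in> borel_measurable borel"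
  by (intro borel_measurable_continuous_onI continuous_intros)
lemma uminus_meas: "(\<lambda>x::'a::topological_group_add. - x) \<in> borel_measurable borel"
  by (intro borel_measurable_continuous_onI continuous_intros)

lemma preimage_borel:
  assumes "f \<in> borel_measurable borel" "A \<in> sets borel" shows "f -` A \<in> sets borel"
  using measurable_sets[OF assms] by simp

lemma left_image_eq: "(\<lambda>a::'a::group_add. c + a) ` A = (\<lambda>x. -c + x) -` A"
proof (rule set_eqI)
  fix x show "x \<in> (\<lambda>a. c + a) ` A \<longleftrightarrow> x \<in> (\<lambda>x. -c + x) -` A"
  proof
    assume "x \<in> (\<lambda>a. c + a) ` A" then show "x \<in> (\<lambda>x. -c + x) -` A" by (auto simp: add.assoc[symmetric])
  next
    assume "x \<in> (\<lambda>x. -c + x) -` A" then have "-c + x \<in> A" by simp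
    moreover have "x = c + (-c + x)" by (simp add: add.assoc[symmetric])
    ultimately show "x \<in> (\<lambda>a. c + a) ` A" by (metis image_eqI)
  qed
qed
lemma right_image_eq: "(\<lambda>a::'a::group_add. a + c) ` A = (\<lambda>x. x + -c) -` A"
proof (rule set_eqI)
  fix x show "x \<in> (\<lambda>a. a + c) ` A \<longleftrightarrow> x \<in> (\<lambda>x. x + -c) -` A"
  proof
    assume "x \<in> (\<lambda>a. a + c) ` A" then show "x \<in> (\<lambda>x. x + -c) -` A" by (auto simp: add.assoc)
  next
    assume "x \<in> (\<lambda>x. x + -c) -` A" then have "x + -c \<in> A" by simp
    moreover have "x = (x + -c) + c" by (simp add: add.assoc)
    ultimately show "x \<in> (\<lambda>a. a + c) ` A" by (metis image_eqI)
  qed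
qed
lemma uminus_image_eq: "uminus ` (A::'a::group_add set) = uminus -` A"
  by (auto simp: image_def) (metis minus_minus)

lemma rtrans_borel: "E \<in> sets borel \<Longrightarrow> rtrans (E::'a::topological_group_add set) y \<in> sets borel"
  unfolding rtrans_def right_image_eq by (intro preimage_borel add_right_meas)

lemma haar_left_distr:
  assumes "haar_prob lam" shows "distr lam borel (\<lambda>x. c + x) = lam"
proof (rule measure_eqI)
  show "sets (distr lam borel (\<lambda>x. c + x)) = sets lam" using haar_sets[OF assms] by simp
  fix A assume "A \<in> sets (distr lam borel (\<lambda>x. c + x))"
  then have A: "A \<in> sets borel" by simp
  have "emeasure (distr lam borel (\<lambda>x. c + x)) A = emeasure lam ((\<lambda>x. c + x) -` A \<inter> space lam)"
    by (rule emeasure_distr) (use A haar_sets[OF assms] add_left_meas in \<open>auto simp: measurable_def\<close>)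
  also have "(\<lambda>x. c + x) -` A \<inter> space lam = (\<lambda>a. - c + a) ` A"
    using haar_sets[OF assms] by (simp add: left_image_eq sets_eq_imp_space_eq)
  also have "emeasure lam \<dots> = emeasure lam A" using assms A by (simp add: haar_prob_def)
  finally show "emeasure (distr lam borel (\<lambda>x. c + x)) A = emeasure lam A" .
qed

lemma haar_left_integral:
  fixes f :: "'a::topological_group_add \<Rightarrow> real"
  assumes "haar_prob lam" "f \<in> borel_measurable borel"
  shows "(\<integral>x. f (c + x) \<partial>lam) = integral\<^sup>L lam f"
proof -
  have m: "(\<lambda>x. c + x) \<in> measurable lam borel"
    using add_left_meas haar_sets[OF assms(1)] by (simp add: measurable_def sets_eq_imp_space_eq)
  have "integral\<^sup>L lam f = integral\<^sup>L (distr lam borel (\<lambda>x. c + x)) f"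
    using haar_left_distr[OF assms(1)] by simp
  also have "\<dots> = (\<integral>x. f (c + x) \<partial>lam)"
    by (rule integral_distr[OF m assms(2)])
  finally show ?thesis by simp
qed



lemma times_borel:
  assumes "A \<in> sets borel" "B \<in> sets borel"
  shows "(A \<times> B :: ('a::topological_space \<times> 'b::topological_space) set) \<in> sets borel"
proof -
  have "A \<times> B = fst -` A \<inter> snd -` B" by auto
  moreover have "fst -` A \<in> sets (borel :: ('a \<times> 'b) measure)"
    by (intro preimage_borel assms borel_measurable_continuous_onI continuous_on_fst continuous_on_id)
  moreover have "snd -` B \<in> sets (borel :: ('a \<times> 'b) measure)"
    by (intro preimage_borel assms borel_measurable_continuous_onI continuous_on_snd continuous_on_id)
  ultimately show ?thesis by simp
qed

lemma rpe_sets: "regular_product_extension lam lam2 \<Longrightarrow> sets lam2 = sets borel"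
  by (simp add: regular_product_extension_def)

lemma nu_part_emeasure:
  fixes lam :: "'a::topological_group_add measure"
  assumes R: "regular_product_extension lam lam2" and P: "P \<subseteq> sets borel" and D: "D \<in> sets borel"
  shows "emeasure (nu_part lam lam2 y P) D =
    (\<Sum>E\<in>{E\<in>P. 0 < emeasure lam E}. emeasure lam2 (D \<inter> (E \<times> rtrans E y)) / emeasure lam E)"
proof -
  let ?mu = "\<lambda>D. \<Sum>E\<in>{E\<in>P. 0 < emeasure lam E}. emeasure lam2 (D \<inter> (E \<times> rtrans E y)) / emeasure lam E"
  have C: "E \<times> rtrans E y \<in> sets borel" if "E \<in> P" for E
    using that P by (intro times_borel rtrans_borel) auto
  have sa: "sigma_algebra UNIV (sets (borel :: ('a \<times> 'a) measure))"
    using sets.sigma_algebra_axioms[of "borel :: ('a \<times> 'a) measure"] by simp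
  have pos: "positive (sets borel) ?mu" by (simp add: positive_def)
  have ca: "countably_additive (sets borel) ?mu"
    unfolding countably_additive_def
  proof (intro allI impI)
    fix A :: "nat \<Rightarrow> ('a \<times> 'a) set"
    assume A: "range A \<subseteq> sets borel" "disjoint_family A" "\<Union> (range A) \<in> sets borel"
    have "(\<Sum>i. ?mu (A i)) = (\<Sum>E\<in>{E\<in>P. 0 < emeasure lam E}. \<Sum>i. emeasure lam2 (A i \<inter> (E \<times> rtrans E y)) / emeasure lam E)"
      by (rule suminf_sum) simp
    also have "\<dots> = ?mu (\<Union> (range A))"
    proof (rule sum.cong[OF refl])
      fix E assume "E \<in> {E\<in>P. 0 < emeasure lam E}"
      then have E: "E \<times> rtrans E y \<in> sets borel" using C by auto
      have "(\<Sum>i. emeasure lam2 (A i \<inter> (E \<times> rtrans E y))) = emeasure lam2 (\<Union>i. A i \<inter> (E \<times> rtrans E y))"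
        apply (rule suminf_emeasure)
        using A E rpe_sets[OF R] apply auto[1]
        using A(2) by (auto simp: disjoint_family_on_def)
      also have "(\<Union>i. A i \<inter> (E \<times> rtrans E y)) = \<Union> (range A) \<inter> (E \<times> rtrans E y)" by auto
      finally show "(\<Sum>i. emeasure lam2 (A i \<inter> (E \<times> rtrans E y)) / emeasure lam E) =
          emeasure lam2 (\<Union> (range A) \<inter> (E \<times> rtrans E y)) / emeasure lam E"
        by simp
    qed
    finally show "(\<Sum>i. ?mu (A i)) = ?mu (\<Union> (range A))" .
  qed
  show ?thesis unfolding nu_part_def
    by (rule emeasure_measure_of_sigma[OF sa pos ca D])
qed

lemma nu_part_sets: "sets (nu_part lam lam2 y P) = sets borel"
  unfolding nu_part_def using sets.sets_measure_of_eq[of "borel :: ('b::topological_space) measure"] by simp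

lemma nu_diag_sets: "sets (nu_diag lam y) = sets borel"
  unfolding nu_diag_def by simp



definition atom_of :: "'a set set \<Rightarrow> 'a \<Rightarrow> 'a set" where
  "atom_of S x = {z. \<forall>V\<in>S. z \<in> V \<longleftrightarrow> x \<in> V}"

definition atoms :: "'a set set \<Rightarrow> 'a set set" where
  "atoms S = range (atom_of S)"

lemma atom_of_self: "x \<in> atom_of S x"
  by (simp add: atom_of_def)

lemma atom_of_eq: "z \<in> atom_of S x \<Longrightarrow> atom_of S z = atom_of S x"
  by (auto simp: atom_of_def)

lemma atoms_sub_or_disj: "E \<in> atoms S \<Longrightarrow> V \<in> S \<Longrightarrow> E \<subseteq> V \<or> E \<inter> V = {}"
  by (auto simp: atoms_def atom_of_def)

lemma refines_atoms_sub_or_disj: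
  "refines Q (atoms S) \<Longrightarrow> V \<in> S \<Longrightarrow> F \<in> Q \<Longrightarrow> F \<subseteq> V \<or> F \<inter> V = {}"
proof -
  assume a: "refines Q (atoms S)" "V \<in> S" "F \<in> Q"
  then obtain E where "E \<in> atoms S" "F \<subseteq> E" by (auto simp: refines_def)
  then show ?thesis using atoms_sub_or_disj[of E S V] a(2) by blast
qed

lemma atom_of_borel:
  assumes "finite S" "S \<subseteq> sets borel"
  shows "atom_of S x \<in> sets borel"
proof -
  have eq: "atom_of S x = UNIV \<inter> (\<Inter>V\<in>S. if x \<in> V then V else UNIV - V)"
    by (auto simp: atom_of_def split: if_splits)
  show ?thesis
  proof (cases "S = {}")
    case True then show ?thesis by (simp add: atom_of_def)
  next
    case False
    have "(\<Inter>V\<in>S. if x \<in> V then V else UNIV - V) \<in> sets borel"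
      using assms False by (intro sets.finite_INT) auto
    then show ?thesis unfolding eq by simp
  qed
qed

lemma atoms_partition:
  assumes "finite S" "S \<subseteq> sets borel"
  shows "atoms S \<in> borel_partitions"
proof -
  have "atoms S \<subseteq> (\<lambda>T. {z. \<forall>V\<in>S. z \<in> V \<longleftrightarrow> V \<in> T}) ` Pow S"
  proof
    fix E assume "E \<in> atoms S"
    then obtain x where "E = atom_of S x" by (auto simp: atoms_def)
    then have "E = (\<lambda>T. {z. \<forall>V\<in>S. z \<in> V \<longleftrightarrow> V \<in> T}) {V\<in>S. x \<in> V}"
      by (auto simp: atom_of_def)
    then show "E \<in> (\<lambda>T. {z. \<forall>V\<in>S. z \<in> V \<longleftrightarrow> V \<in> T}) ` Pow S" by blast
  qed
  then have fin: "finite (atoms S)" using assms(1) by (meson finite_Pow_iff finite_imageI finite_subset)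
  have disj: "E \<inter> F = {}" if EF: "E \<in> atoms S" "F \<in> atoms S" "E \<noteq> F" for E F
  proof (rule ccontr)
    assume "E \<inter> F \<noteq> {}"
    then obtain z where z: "z \<in> E" "z \<in> F" by auto
    obtain x x' where "E = atom_of S x" "F = atom_of S x'" using EF by (auto simp: atoms_def)
    then show False using atom_of_eq[of z S x] atom_of_eq[of z S x'] z EF(3) by simp
  qed
  have s: "atoms S \<subseteq> sets borel" using atom_of_borel[OF assms] by (auto simp: atoms_def)
  have e: "{} \<notin> atoms S" unfolding atoms_def by (metis atom_of_self empty_iff imageE)
  have u: "\<Union>(atoms S) = UNIV" unfolding atoms_def by (metis UNIV_I UN_I atom_of_self subsetI subset_antisym)
  show ?thesis unfolding borel_partitions_def
    using fin s e u disj by blast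
qed

lemma bp_cover: "P \<in> borel_partitions \<Longrightarrow> \<exists>E\<in>P. x \<in> E"
  by (auto simp: borel_partitions_def)
lemma bp_disj: "P \<in> borel_partitions \<Longrightarrow> E \<in> P \<Longrightarrow> F \<in> P \<Longrightarrow> x \<in> E \<Longrightarrow> x \<in> F \<Longrightarrow> E = F"
  unfolding borel_partitions_def by blast
lemma bp_finite: "P \<in> borel_partitions \<Longrightarrow> finite P"
  by (auto simp: borel_partitions_def)
lemma bp_borel: "P \<in> borel_partitions \<Longrightarrow> E \<in> P \<Longrightarrow> E \<in> sets borel"
  by (auto simp: borel_partitions_def)
lemma bp_nonempty: "P \<in> borel_partitions \<Longrightarrow> E \<in> P \<Longrightarrow> E \<noteq> {}"
  by (auto simp: borel_partitions_def)



lemma grid_exists: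
  fixes f :: "'a::topological_space \<times> 'a \<Rightarrow> real"
  assumes cpt: "compact (UNIV :: 'a set)" and f: "continuous_on UNIV f" and e: "e > 0"
  obtains P where "P \<in> borel_partitions"
    "\<And>A B p q. A \<in> P \<Longrightarrow> B \<in> P \<Longrightarrow> p \<in> A \<times> B \<Longrightarrow> q \<in> A \<times> B \<Longrightarrow> \<bar>f p - f q\<bar> < e"
proof -
  define Ob where "Ob p = f -` {r. \<bar>r - f p\<bar> < e/2}" for p
  have "{r. \<bar>r - f p\<bar> < e/2} = ball (f p) (e/2)" for p
    by (auto simp: ball_def dist_real_def abs_minus_commute)
  then have "open (Ob p)" for p
    unfolding Ob_def by (metis open_vimage f open_ball)
  moreover have "p \<in> Ob p" for p using e by (simp add: Ob_def)
  ultimately have ex: "\<exists>VW. open (fst VW) \<and> open (snd VW) \<and> p \<in> fst VW \<times> snd VW \<and> fst VW \<times> snd VW \<subseteq> Ob p" for p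
  proof -
    assume a: "\<And>p. open (Ob p)" "\<And>p. p \<in> Ob p"
    obtain A B where "open A" "open B" "p \<in> A \<times> B" "A \<times> B \<subseteq> Ob p"
      using open_prod_elim[OF a(1)[of p] a(2)[of p]] by blast
    then show ?thesis by (intro exI[of _ "(A,B)"]) simp
  qed
  obtain VW where VW0: "\<forall>p. open (fst (VW p)) \<and> open (snd (VW p)) \<and> p \<in> fst (VW p) \<times> snd (VW p) \<and> fst (VW p) \<times> snd (VW p) \<subseteq> Ob p"
  proof -
    have "\<exists>VW. \<forall>p. open (fst (VW p)) \<and> open (snd (VW p)) \<and> p \<in> fst (VW p) \<times> snd (VW p) \<and> fst (VW p) \<times> snd (VW p) \<subseteq> Ob p"
      by (rule choice) (rule allI, rule ex)
    then show ?thesis using that by (rule exE)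
  qed
  define V where "V p = fst (VW p)" for p
  define W where "W p = snd (VW p)" for p
  have VW: "\<And>p. open (V p) \<and> open (W p) \<and> p \<in> V p \<times> W p \<and> V p \<times> W p \<subseteq> Ob p"
    unfolding V_def W_def by (rule spec[OF VW0])
  have "compact (UNIV :: ('a \<times> 'a) set)"
    using compact_Times[OF cpt cpt] by simp
  moreover have "\<And>p. p \<in> UNIV \<Longrightarrow> open (V p \<times> W p)" using VW by (simp add: open_Times)
  moreover have "UNIV \<subseteq> (\<Union>p\<in>UNIV. V p \<times> W p)" using VW by blast
  ultimately obtain T where T: "finite T" "UNIV \<subseteq> (\<Union>p\<in>T. V p \<times> W p)"
    by (rule compactE_image) blast
  define S where "S = V ` T \<union> W ` T"
  have S1: "finite S" using T(1) by (simp add: S_def)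
  have S2: "S \<subseteq> sets borel" unfolding S_def using VW by (auto intro: borel_open)
  show ?thesis
  proof (rule that[OF atoms_partition[OF S1 S2]])
    fix A B p q assume A: "A \<in> atoms S" and B: "B \<in> atoms S" and p: "p \<in> A \<times> B" and q: "q \<in> A \<times> B"
    have "p \<in> (\<Union>p\<in>T. V p \<times> W p)" using T(2) by (rule subsetD) simp
    then obtain t where t: "t \<in> T" "p \<in> V t \<times> W t" by (rule UN_E)
    have "V t \<in> S" "W t \<in> S" using t by (auto simp: S_def)
    then have "A \<subseteq> V t" "B \<subseteq> W t"
      using atoms_sub_or_disj[OF A, of "V t"] atoms_sub_or_disj[OF B, of "W t"] t p by auto
    then have "A \<times> B \<subseteq> Ob t" using VW[of t] by blast
    then have "p \<in> Ob t" "q \<in> Ob t" using p q by blast+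
    then have "\<bar>f p - f t\<bar> < e/2" "\<bar>f q - f t\<bar> < e/2" by (auto simp: Ob_def)
    then show "\<bar>f p - f q\<bar> < e" by linarith
  qed
qed



definition cell_pt :: "'a set \<Rightarrow> 'b set \<Rightarrow> 'a \<times> 'b" where
  "cell_pt A B = (SOME p. p \<in> A \<times> B)"

definition gridfun :: "('a \<times> 'a \<Rightarrow> real) \<Rightarrow> 'a set set \<Rightarrow> 'a \<times> 'a \<Rightarrow> real" where
  "gridfun f P q = (\<Sum>AB\<in>P \<times> P. f (cell_pt (fst AB) (snd AB)) * indicator (fst AB \<times> snd AB) q)"

lemma gridfun_value:
  assumes P: "P \<in> borel_partitions" and AB: "A \<in> P" "B \<in> P" "q \<in> A \<times> B"
  shows "gridfun f P q = f (cell_pt A B)"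
proof -
  have "gridfun f P q = (\<Sum>AB\<in>P \<times> P. if AB = (A, B) then f (cell_pt A B) else 0)"
    unfolding gridfun_def
  proof (rule sum.cong[OF refl])
    fix AB assume "AB \<in> P \<times> P"
    then obtain A' B' where AB': "AB = (A', B')" "A' \<in> P" "B' \<in> P" by auto
    show "f (cell_pt (fst AB) (snd AB)) * indicator (fst AB \<times> snd AB) q =
        (if AB = (A, B) then f (cell_pt A B) else 0)"
    proof (cases "q \<in> A' \<times> B'")
      case True
      then have "A' = A" "B' = B" using bp_disj[OF P] AB AB' by (metis mem_Times_iff)+
      then show ?thesis using AB' True by simp
    next
      case False
      then have ne: "AB \<noteq> (A, B)" using AB' AB by auto
      have "indicator (fst AB \<times> snd AB) q = (0::real)" using False AB'(1) by simp
      then show ?thesis using ne by simp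
    qed
  qed
  also have "\<dots> = f (cell_pt A B)"
    using AB bp_finite[OF P] by (simp add: sum.delta)
  finally show ?thesis .
qed

lemma cell_pt_in: "p \<in> A \<times> B \<Longrightarrow> cell_pt A B \<in> A \<times> B"
  unfolding cell_pt_def by (rule someI)

lemma gridfun_close:
  assumes P: "P \<in> borel_partitions"
    and G: "\<And>A B p q. A \<in> P \<Longrightarrow> B \<in> P \<Longrightarrow> p \<in> A \<times> B \<Longrightarrow> q \<in> A \<times> B \<Longrightarrow> \<bar>f p - f q\<bar> < e"
  shows "\<bar>f q - gridfun f P q\<bar> < e"
proof -
  obtain A where A: "A \<in> P" "fst q \<in> A" using bp_cover[OF P] by blast
  obtain B where B: "B \<in> P" "snd q \<in> B" using bp_cover[OF P] by blast
  have q: "q \<in> A \<times> B" using A B by (simp add: mem_Times_iff)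
  show ?thesis
    using gridfun_value[OF P A(1) B(1) q] G[OF A(1) B(1) q cell_pt_in[OF q]] by simp
qed

lemma gridfun_meas:
  assumes P: "P \<in> borel_partitions" and S: "\<And>A B. A \<in> P \<Longrightarrow> B \<in> P \<Longrightarrow> A \<times> B \<in> sets M"
  shows "gridfun f P \<in> borel_measurable M"
  unfolding gridfun_def[abs_def]
  by (intro borel_measurable_sum borel_measurable_times borel_measurable_const borel_measurable_indicator)
     (use S in auto)

lemma gridfun_integral:
  assumes M: "finite_measure M" and P: "P \<in> borel_partitions"
    and S: "\<And>A B. A \<in> P \<Longrightarrow> B \<in> P \<Longrightarrow> A \<times> B \<in> sets M"
  shows "integral\<^sup>L M (gridfun f P) =
    (\<Sum>AB\<in>P \<times> P. f (cell_pt (fst AB) (snd AB)) * measure M (fst AB \<times> snd AB))"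
proof -
  have int: "integrable M (\<lambda>q. f (cell_pt (fst AB) (snd AB)) * indicator (fst AB \<times> snd AB) q)"
    if "AB \<in> P \<times> P" for AB
    using that S finite_measure.emeasure_finite[OF M]
    by (intro integrable_mult_right integrable_real_indicator) (auto simp: top.not_eq_extremum)
  have "integral\<^sup>L M (gridfun f P) =
      (\<Sum>AB\<in>P \<times> P. \<integral>q. f (cell_pt (fst AB) (snd AB)) * indicator (fst AB \<times> snd AB) q \<partial>M)"
    unfolding gridfun_def by (rule Bochner_Integration.integral_sum[OF int])
  also have "\<dots> = (\<Sum>AB\<in>P \<times> P. f (cell_pt (fst AB) (snd AB)) * measure M (fst AB \<times> snd AB))"
  proof (rule sum.cong[OF refl])
    fix AB assume "AB \<in> P \<times> P"
    then have "fst AB \<times> snd AB \<in> sets M" using S by auto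
    then have "fst AB \<times> snd AB \<inter> space M = fst AB \<times> snd AB" using sets.sets_into_space by blast
    then show "(\<integral>q. f (cell_pt (fst AB) (snd AB)) * indicator (fst AB \<times> snd AB) q \<partial>M) =
        f (cell_pt (fst AB) (snd AB)) * measure M (fst AB \<times> snd AB)" by simp
  qed
  finally show ?thesis .
qed

lemma cont_bounded:
  fixes f :: "'b::topological_space \<Rightarrow> real"
  assumes "compact (UNIV :: 'b set)" "continuous_on UNIV f"
  obtains B where "\<And>x. \<bar>f x\<bar> \<le> B"
proof -
  have "compact (range f)" using compact_continuous_image[OF assms(2,1)] .
  then have "bounded (range f)" by (rule compact_imp_bounded)
  then obtain B where "\<forall>y\<in>range f. norm y \<le> B" by (auto simp: bounded_iff)
  then show ?thesis using that by auto
qed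

lemma cont_integrable:
  fixes f :: "'b::topological_space \<Rightarrow> real"
  assumes M: "finite_measure M" "sets M = sets borel"
    and cpt: "compact (UNIV :: 'b set)" and f: "continuous_on UNIV f"
  shows "integrable M f"
proof -
  obtain B where B: "\<And>x. \<bar>f x\<bar> \<le> B" using cont_bounded[OF cpt f] by blast
  have m: "f \<in> borel_measurable M"
    using borel_measurable_continuous_onI[OF f] measurable_cong_sets[OF M(2) refl] by blast
  show ?thesis
    by (rule finite_measure.integrable_const_bound[OF M(1), of _ B]) (use B m in auto)
qed

lemma approx_integral:
  fixes f g :: "'b \<Rightarrow> real"
  assumes M: "prob_space M" and f: "integrable M f" and g: "integrable M g"
    and fg: "\<And>x. \<bar>f x - g x\<bar> \<le> e"
  shows "\<bar>integral\<^sup>L M f - integral\<^sup>L M g\<bar> \<le> e"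
proof -
  have "\<bar>integral\<^sup>L M f - integral\<^sup>L M g\<bar> = \<bar>\<integral>x. f x - g x \<partial>M\<bar>" using f g by simp
  also have "\<dots> \<le> (\<integral>x. norm (f x - g x) \<partial>M)" using integral_norm_bound[of M "\<lambda>x. f x - g x"] by simp
  also have "\<dots> \<le> (\<integral>x. e \<partial>M)"
    using f g fg prob_space.finite_measure[OF M]
    by (intro integral_mono) (auto intro: finite_measure.integrable_const)
  also have "\<dots> = e" using prob_space.prob_space[OF M] by simp
  finally show ?thesis .
qed



lemma cont_meas_rect:
  fixes F :: "'a::topological_space \<times> 'a \<Rightarrow> real"
  assumes cpt: "compact (UNIV :: 'a set)" and F: "continuous_on UNIV F"
    and S: "\<And>A B. A \<in> sets borel \<Longrightarrow> B \<in> sets borel \<Longrightarrow> A \<times> B \<in> sets M"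
    and sp: "space M = UNIV"
  shows "F \<in> borel_measurable M"
proof -
  define Q where "Q n P \<longleftrightarrow> P \<in> borel_partitions \<and>
    (\<forall>A B p q. A \<in> P \<longrightarrow> B \<in> P \<longrightarrow> p \<in> A \<times> B \<longrightarrow> q \<in> A \<times> B \<longrightarrow> \<bar>F p - F q\<bar> < inverse (real (Suc n)))" for n P
  have ex: "\<exists>P. Q n P" for n
  proof -
    have "inverse (real (Suc n)) > 0" by simp
    from grid_exists[OF cpt F this] obtain P where "P \<in> borel_partitions"
      "\<And>A B p q. A \<in> P \<Longrightarrow> B \<in> P \<Longrightarrow> p \<in> A \<times> B \<Longrightarrow> q \<in> A \<times> B \<Longrightarrow> \<bar>F p - F q\<bar> < inverse (real (Suc n))"
      by blast
    then show ?thesis unfolding Q_def by blast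
  qed
  define Pn where "Pn n = (SOME P. Q n P)" for n
  have QP: "Q n (Pn n)" for n unfolding Pn_def by (rule someI_ex[OF ex])
  have close: "\<bar>F q - gridfun F (Pn n) q\<bar> < inverse (real (Suc n))" for n q
    using QP[of n] unfolding Q_def by (intro gridfun_close) blast+
  show ?thesis
  proof (rule borel_measurable_LIMSEQ_real[where u="\<lambda>n. gridfun F (Pn n)"])
    fix q
    have lo: "(\<lambda>n. F q - inverse (real (Suc n))) \<longlonglongrightarrow> F q - 0"
      by (intro tendsto_diff tendsto_const LIMSEQ_inverse_real_of_nat)
    have hi: "(\<lambda>n. F q + inverse (real (Suc n))) \<longlonglongrightarrow> F q + 0"
      by (intro tendsto_add tendsto_const LIMSEQ_inverse_real_of_nat)
    show "(\<lambda>n. gridfun F (Pn n) q) \<longlonglongrightarrow> F q"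
    proof (rule tendsto_sandwich[OF _ _ lo[unfolded diff_zero] hi[unfolded add_0_right]])
      show "\<forall>\<^sub>F n in sequentially. F q - inverse (real (Suc n)) \<le> gridfun F (Pn n) q"
        using close[of q] by (intro always_eventually allI) (smt (verit) close)
      show "\<forall>\<^sub>F n in sequentially. gridfun F (Pn n) q \<le> F q + inverse (real (Suc n))"
        using close[of q] by (intro always_eventually allI) (smt (verit) close)
    qed
  next
    fix n show "gridfun F (Pn n) \<in> borel_measurable M"
      using QP[of n] unfolding Q_def by (intro gridfun_meas S) (auto intro: bp_borel)
  qed
qed

context
  fixes lam :: "'a::{topological_group_add, t2_space} measure"
  assumes cpt: "compact (UNIV :: 'a set)" and H: "haar_prob lam"
begin

lemma lam_sets: "sets lam = sets borel" using haar_sets[OF H] .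
lemma lam_space: "space lam = UNIV" using sets_eq_imp_space_eq[OF lam_sets] by simp
lemma lam_prob: "prob_space lam" using haar_prob_space[OF H] .

lemma integral_uminus_inv:
  fixes h :: "'a \<Rightarrow> real"
  assumes h: "continuous_on UNIV h"
  shows "integral\<^sup>L lam h = (\<integral>x. h (- x) \<partial>lam)"
proof -
  define f where "f x z = h (- z + x)" for x z
  have Fc: "continuous_on UNIV (case_prod f)"
    unfolding f_def case_prod_beta
    by (rule continuous_on_compose2[OF h]) (auto intro!: continuous_intros)
  have PS: "pair_sigma_finite lam lam"
    using lam_prob by (simp add: pair_sigma_finite_def prob_space_imp_sigma_finite)
  have PP: "prob_space (lam \<Otimes>\<^sub>M lam)" using prob_space_pair[OF lam_prob lam_prob] .
  have sp: "space (lam \<Otimes>\<^sub>M lam) = UNIV" by (simp add: space_pair_measure lam_space)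
  have meas: "case_prod f \<in> borel_measurable (lam \<Otimes>\<^sub>M lam)"
    by (rule cont_meas_rect[OF cpt Fc _ sp]) (simp add: pair_measureI lam_sets)
  obtain B where B: "\<And>x. \<bar>h x\<bar> \<le> B" using cont_bounded[OF cpt h] by blast
  have int: "integrable (lam \<Otimes>\<^sub>M lam) (case_prod f)"
    by (rule finite_measure.integrable_const_bound[OF prob_space.finite_measure[OF PP], of _ B])
       (use meas B in \<open>auto simp: f_def\<close>)
  have hm: "h \<in> borel_measurable borel" by (rule borel_measurable_continuous_onI[OF h])
  have hm': "(\<lambda>w. h (- w)) \<in> borel_measurable borel"
    by (rule borel_measurable_continuous_onI) (rule continuous_on_compose2[OF h], auto intro!: continuous_intros)
  have "(\<integral>z. (\<integral>x. f x z \<partial>lam) \<partial>lam) = (\<integral>x. (\<integral>z. f x z \<partial>lam) \<partial>lam)"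
    by (rule pair_sigma_finite.Fubini_integral[OF PS int])
  moreover have "(\<integral>x. f x z \<partial>lam) = integral\<^sup>L lam h" for z
    unfolding f_def by (rule haar_left_integral[OF H hm])
  moreover have "(\<integral>z. f x z \<partial>lam) = (\<integral>w. h (- w) \<partial>lam)" for x
  proof -
    have "(\<integral>z. f x z \<partial>lam) = (\<integral>z. (\<lambda>w. h (- w)) (- x + z) \<partial>lam)"
      unfolding f_def by (simp add: minus_add)
    also have "\<dots> = (\<integral>w. h (- w) \<partial>lam)" by (rule haar_left_integral[OF H hm'])
    finally show ?thesis .
  qed
  ultimately have "(\<integral>z. integral\<^sup>L lam h \<partial>lam) = (\<integral>x. (\<integral>w. h (- w) \<partial>lam) \<partial>lam)" by simp
  then show ?thesis using prob_space.prob_space[OF lam_prob] by simp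
qed


lemma lam_regular: "regular_measure lam" using H by (simp add: haar_prob_def)

lemma uminus_image_borel: "E \<in> sets borel \<Longrightarrow> uminus ` (E::'a set) \<in> sets borel"
  unfolding uminus_image_eq by (rule preimage_borel[OF uminus_meas])

lemma lam_fin: "emeasure lam A = ennreal (measure lam A)"
  using prob_space.finite_measure[OF lam_prob] by (simp add: finite_measure.emeasure_eq_measure)

lemma compact_le_neg:
  assumes K: "compact K"
  shows "emeasure lam K \<le> emeasure lam (uminus ` K)"
proof -
  have cK: "compact (uminus ` K)"
    by (rule compact_continuous_image[OF _ K]) (auto intro!: continuous_intros)
  then have bK: "uminus ` K \<in> sets borel" by (intro borel_closed compact_imp_closed)
  have "emeasure lam (uminus ` K) = (INF U\<in>{U. open U \<and> uminus ` K \<subseteq> U}. emeasure lam U)"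
    using lam_regular bK unfolding regular_measure_def by blast
  also have "emeasure lam K \<le> \<dots>"
  proof (rule INF_greatest)
    fix U assume U: "U \<in> {U. open U \<and> uminus ` K \<subseteq> U}"
    have oU: "open (uminus -` U)" using U by (intro open_vimage) (auto intro!: continuous_intros)
    have KU: "K \<subseteq> uminus -` U" using U by auto
    obtain f :: "'a \<Rightarrow> real" where f: "continuous_on UNIV f" "\<And>x. 0 \<le> f x" "\<And>x. f x \<le> 1"
      "\<And>x. x \<in> K \<Longrightarrow> f x = 1" "\<And>x. x \<notin> uminus -` U \<Longrightarrow> f x = 0"
      using urysohn_cpt[OF cpt K oU KU] by blast
    have fm: "finite_measure lam" using prob_space.finite_measure[OF lam_prob] .
    have bKK: "K \<in> sets lam" using lam_sets borel_closed[OF compact_imp_closed[OF K]] by simp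
    have bU: "U \<in> sets lam" using lam_sets U borel_open by auto
    have fc': "continuous_on UNIV (\<lambda>x. f (- x))"
      by (rule continuous_on_compose2[OF f(1)]) (auto intro!: continuous_intros)
    have "measure lam K = (\<integral>x. indicator K x \<partial>lam)" using bKK lam_space by simp
    also have "\<dots> \<le> integral\<^sup>L lam f"
    proof (rule integral_mono)
      show "integrable lam f" by (rule cont_integrable[OF fm lam_sets cpt f(1)])
      show "integrable lam (indicator K :: 'a \<Rightarrow> real)"
        using bKK finite_measure.emeasure_finite[OF fm] by (auto simp: top.not_eq_extremum)
      fix x show "indicator K x \<le> f x"
        using f(2)[of x] f(4)[of x] by (cases "x \<in> K") auto
    qed
    also have "\<dots> = (\<integral>x. f (- x) \<partial>lam)" by (rule integral_uminus_inv[OF f(1)])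
    also have "\<dots> \<le> (\<integral>x. indicator U x \<partial>lam)"
    proof (rule integral_mono)
      show "integrable lam (\<lambda>x. f (- x))" by (rule cont_integrable[OF fm lam_sets cpt fc'])
      show "integrable lam (indicator U :: 'a \<Rightarrow> real)"
        using bU finite_measure.emeasure_finite[OF fm] by (auto simp: top.not_eq_extremum)
      fix x show "f (- x) \<le> indicator U x"
        using f(3)[of "- x"] f(5)[of "- x"] by (cases "x \<in> U") auto
    qed
    also have "\<dots> = measure lam U" using bU lam_space by simp
    finally have "measure lam K \<le> measure lam U" .
    then show "emeasure lam K \<le> emeasure lam U" by (simp add: lam_fin)
  qed
  finally show ?thesis .
qed

lemma borel_le_neg:
  assumes E: "E \<in> sets borel"
  shows "emeasure lam E \<le> emeasure lam (uminus ` E)"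
proof -
  have "emeasure lam E = (SUP K\<in>{K. compact K \<and> K \<subseteq> E}. emeasure lam K)"
    using lam_regular E unfolding regular_measure_def by blast
  also have "\<dots> \<le> emeasure lam (uminus ` E)"
  proof (rule SUP_least)
    fix K assume K: "K \<in> {K. compact K \<and> K \<subseteq> E}"
    have "emeasure lam K \<le> emeasure lam (uminus ` K)" using K compact_le_neg by blast
    also have "\<dots> \<le> emeasure lam (uminus ` E)"
      using K uminus_image_borel[OF E] lam_sets by (intro emeasure_mono) auto
    finally show "emeasure lam K \<le> emeasure lam (uminus ` E)" .
  qed
  finally show ?thesis .
qed

lemma borel_eq_neg:
  assumes E: "E \<in> sets borel"
  shows "emeasure lam (uminus ` E) = emeasure lam E"
proof -
  have "uminus ` uminus ` E = E" by (simp add: image_image)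
  then have "emeasure lam (uminus ` E) \<le> emeasure lam E"
    using borel_le_neg[OF uminus_image_borel[OF E]] by simp
  then show ?thesis using borel_le_neg[OF E] by simp
qed

lemma right_invariant:
  assumes E: "E \<in> sets borel"
  shows "emeasure lam (rtrans E y) = emeasure lam E"
proof -
  define L where "L = (\<lambda>a. - y + a) ` (uminus ` E)"
  have eq: "rtrans E y = uminus ` L"
    unfolding rtrans_def L_def image_image by (simp add: minus_add)
  have bE: "uminus ` E \<in> sets borel" by (rule uminus_image_borel[OF E])
  have bL: "L \<in> sets borel" unfolding L_def left_image_eq by (rule preimage_borel[OF add_left_meas bE])
  have "emeasure lam (rtrans E y) = emeasure lam L" unfolding eq by (rule borel_eq_neg[OF bL])
  also have "\<dots> = emeasure lam (uminus ` E)" using H bE unfolding L_def haar_prob_def by blast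
  also have "\<dots> = emeasure lam E" by (rule borel_eq_neg[OF E])
  finally show ?thesis .
qed

end



lemma sq_div: "0 < a \<Longrightarrow> a \<noteq> top \<Longrightarrow> a * a / a = (a::ennreal)"
  by (rule ennreal_mult_divide_eq) auto

lemma gridfun_integrable:
  assumes M: "finite_measure M" and S: "\<And>A B. A \<in> P \<Longrightarrow> B \<in> P \<Longrightarrow> A \<times> B \<in> sets M"
  shows "integrable M (gridfun f P)"
  unfolding gridfun_def[abs_def]
  using S finite_measure.emeasure_finite[OF M]
  by (intro Bochner_Integration.integrable_sum integrable_mult_right integrable_real_indicator)
     (auto simp: top.not_eq_extremum)

context
  fixes lam :: "'a::{topological_group_add, t2_space} measure" and lam2 :: "('a \<times> 'a) measure" and y :: 'a
  assumes cpt: "compact (UNIV :: 'a set)" and H: "haar_prob lam" and R: "regular_product_extension lam lam2"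
begin

lemma lam2_rect: "A \<in> sets borel \<Longrightarrow> B \<in> sets borel \<Longrightarrow> emeasure lam2 (A \<times> B) = emeasure lam A * emeasure lam B"
  using R by (simp add: regular_product_extension_def)

lemma partition_sum:
  assumes P: "P \<in> borel_partitions" and A: "A \<in> sets borel"
  shows "(\<Sum>E\<in>P. emeasure lam (E \<inter> A)) = emeasure lam A"
proof -
  have "(\<Sum>E\<in>P. emeasure lam (E \<inter> A)) = emeasure lam (\<Union>E\<in>P. E \<inter> A)"
  proof (rule sum_emeasure)
    show "(\<lambda>E. E \<inter> A) ` P \<subseteq> sets lam" using P A bp_borel[OF P] lam_sets[OF cpt H] by auto
    show "disjoint_family_on (\<lambda>E. E \<inter> A) P"
      using P unfolding borel_partitions_def disjoint_family_on_def by blast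
    show "finite P" using bp_finite[OF P] .
  qed
  also have "(\<Union>E\<in>P. E \<inter> A) = A" using P by (auto simp: borel_partitions_def)
  finally show ?thesis .
qed

lemma pos_sum:
  assumes "finite P" "\<And>E. E \<in> P \<Longrightarrow> emeasure lam E = 0 \<Longrightarrow> g E = (0::ennreal)"
  shows "(\<Sum>E\<in>{E\<in>P. 0 < emeasure lam E}. g E) = (\<Sum>E\<in>P. g E)"
  by (rule sum.mono_neutral_left) (use assms in \<open>auto simp: zero_less_iff_neq_zero\<close>)

lemma lam_ne_top: "emeasure lam E \<noteq> top"
  using lam_fin[OF cpt H] by simp

lemma nu_part_prob:
  assumes P: "P \<in> borel_partitions"
  shows "prob_space (nu_part lam lam2 y P)"
proof
  have sp: "space (nu_part lam lam2 y P) = UNIV"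
    using sets_eq_imp_space_eq[OF nu_part_sets[of lam lam2 y P]] by simp
  have PB: "P \<subseteq> sets borel" using P by (auto simp: borel_partitions_def)
  have "emeasure (nu_part lam lam2 y P) UNIV =
      (\<Sum>E\<in>{E\<in>P. 0 < emeasure lam E}. emeasure lam2 (UNIV \<inter> (E \<times> rtrans E y)) / emeasure lam E)"
    by (rule nu_part_emeasure[OF R PB]) simp
  also have "\<dots> = (\<Sum>E\<in>{E\<in>P. 0 < emeasure lam E}. emeasure lam (E \<inter> UNIV))"
  proof (rule sum.cong[OF refl])
    fix E assume E: "E \<in> {E\<in>P. 0 < emeasure lam E}"
    then have bE: "E \<in> sets borel" using PB by auto
    have "emeasure lam2 (UNIV \<inter> (E \<times> rtrans E y)) = emeasure lam E * emeasure lam E"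
      using lam2_rect[OF bE rtrans_borel[OF bE]] right_invariant[OF cpt H bE] by simp
    then show "emeasure lam2 (UNIV \<inter> (E \<times> rtrans E y)) / emeasure lam E = emeasure lam (E \<inter> UNIV)"
      using E lam_ne_top[of E] sq_div[of "emeasure lam E"] by simp
  qed
  also have "\<dots> = (\<Sum>E\<in>P. emeasure lam (E \<inter> UNIV))"
    by (rule pos_sum) (use bp_finite[OF P] in auto)
  also have "\<dots> = emeasure lam UNIV" by (rule partition_sum[OF P]) simp
  also have "\<dots> = 1" using prob_space.emeasure_space_1[OF lam_prob[OF cpt H]] lam_space[OF cpt H] by simp
  finally show "emeasure (nu_part lam lam2 y P) (space (nu_part lam lam2 y P)) = 1" using sp by simp
qed

lemma s_meas: "(\<lambda>x. (x, x + y)) \<in> measurable lam borel"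
proof -
  have "(\<lambda>x::'a. (x, x + y)) \<in> borel_measurable borel"
    by (intro borel_measurable_continuous_onI continuous_intros)
  then show ?thesis using measurable_cong_sets[OF lam_sets[OF cpt H] refl] by blast
qed

lemma nu_diag_prob: "prob_space (nu_diag lam y)"
  unfolding nu_diag_def by (rule prob_space.prob_space_distr[OF lam_prob[OF cpt H] s_meas])

lemma rtrans_neg: "rtrans B (- y) = {x. x + y \<in> B}"
  unfolding rtrans_def right_image_eq by auto

lemma nu_diag_rect:
  assumes A: "A \<in> sets borel" and B: "B \<in> sets borel"
  shows "emeasure (nu_diag lam y) (A \<times> B) = emeasure lam (A \<inter> rtrans B (- y))"
proof -
  have "emeasure (nu_diag lam y) (A \<times> B) = emeasure lam ((\<lambda>x. (x, x + y)) -` (A \<times> B) \<inter> space lam)"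
    unfolding nu_diag_def by (rule emeasure_distr[OF s_meas]) (simp add: times_borel A B)
  also have "(\<lambda>x. (x, x + y)) -` (A \<times> B) \<inter> space lam = A \<inter> rtrans B (- y)"
    unfolding rtrans_neg lam_space[OF cpt H] by auto
  finally show ?thesis .
qed

lemma nu_part_rect:
  assumes A: "A \<in> sets borel" and B: "B \<in> sets borel" and Q: "Q \<in> borel_partitions"
    and sd: "\<And>E. E \<in> Q \<Longrightarrow> (E \<subseteq> A \<or> E \<inter> A = {}) \<and> (E \<subseteq> rtrans B (- y) \<or> E \<inter> rtrans B (- y) = {})"
  shows "emeasure (nu_part lam lam2 y Q) (A \<times> B) = emeasure (nu_diag lam y) (A \<times> B)"
proof -
  let ?B' = "rtrans B (- y)"
  have QB: "Q \<subseteq> sets borel" using Q by (auto simp: borel_partitions_def)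
  have B': "?B' \<in> sets borel" by (rule rtrans_borel[OF B])
  have "emeasure (nu_part lam lam2 y Q) (A \<times> B) =
      (\<Sum>E\<in>{E\<in>Q. 0 < emeasure lam E}. emeasure lam2 ((A \<times> B) \<inter> (E \<times> rtrans E y)) / emeasure lam E)"
    by (rule nu_part_emeasure[OF R QB]) (rule times_borel[OF A B])
  also have "\<dots> = (\<Sum>E\<in>{E\<in>Q. 0 < emeasure lam E}. emeasure lam (E \<inter> (A \<inter> ?B')))"
  proof (rule sum.cong[OF refl])
    fix E assume E: "E \<in> {E\<in>Q. 0 < emeasure lam E}"
    then have bE: "E \<in> sets borel" and EQ: "E \<in> Q" using QB by auto
    have rE: "rtrans E y \<in> sets borel" by (rule rtrans_borel[OF bE])
    have eq: "(A \<times> B) \<inter> (E \<times> rtrans E y) = (A \<inter> E) \<times> (B \<inter> rtrans E y)" by auto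
    have l2: "emeasure lam2 ((A \<times> B) \<inter> (E \<times> rtrans E y)) = emeasure lam (A \<inter> E) * emeasure lam (B \<inter> rtrans E y)"
      unfolding eq using A B bE rE by (intro lam2_rect) auto
    show "emeasure lam2 ((A \<times> B) \<inter> (E \<times> rtrans E y)) / emeasure lam E = emeasure lam (E \<inter> (A \<inter> ?B'))"
    proof (cases "E \<subseteq> A \<and> E \<subseteq> ?B'")
      case True
      then have "A \<inter> E = E" by auto
      moreover have "B \<inter> rtrans E y = rtrans E y"
        using True unfolding rtrans_neg unfolding rtrans_def by blast
      moreover have "E \<inter> (A \<inter> ?B') = E" using True by auto
      ultimately show ?thesis
        using l2 right_invariant[OF cpt H bE] E lam_ne_top[of E] sq_div[of "emeasure lam E"] by simp
    next
      case False
      then have dis: "E \<inter> A = {} \<or> E \<inter> ?B' = {}" using sd[OF EQ] by blast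
      then have "A \<inter> E = {} \<or> B \<inter> rtrans E y = {}"
        unfolding rtrans_neg unfolding rtrans_def by blast
      then have "emeasure lam2 ((A \<times> B) \<inter> (E \<times> rtrans E y)) = 0"
        by (elim disjE) (simp_all add: l2)
      moreover have "E \<inter> (A \<inter> ?B') = {}" using dis by auto
      ultimately show ?thesis by simp
    qed
  qed
  also have "\<dots> = (\<Sum>E\<in>Q. emeasure lam (E \<inter> (A \<inter> ?B')))"
  proof (rule pos_sum)
    show "finite Q" using bp_finite[OF Q] .
    fix E assume "E \<in> Q" "emeasure lam E = 0"
    moreover have "E \<in> sets lam" using \<open>E \<in> Q\<close> QB lam_sets[OF cpt H] by auto
    ultimately show "emeasure lam (E \<inter> (A \<inter> ?B')) = 0"
      using emeasure_eq_0[of E lam "E \<inter> (A \<inter> ?B')"] by simp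
  qed
  also have "\<dots> = emeasure lam (A \<inter> ?B')" using A B' by (intro partition_sum[OF Q]) simp
  also have "\<dots> = emeasure (nu_diag lam y) (A \<times> B)" by (rule nu_diag_rect[OF A B, symmetric])
  finally show ?thesis .
qed

lemma eventually_refines:
  assumes "P0 \<in> borel_partitions"
  shows "eventually (\<lambda>Q. Q \<in> borel_partitions \<and> refines Q P0) (partition_net :: 'a set set filter)"
  unfolding partition_net_def
  by (rule eventually_INF1[OF assms]) (simp add: eventually_principal)

lemma eventually_rect:
  assumes A: "A \<in> sets borel" and B: "B \<in> sets borel"
  shows "eventually (\<lambda>Q. measure (nu_part lam lam2 y Q) (A \<times> B) = measure (nu_diag lam y) (A \<times> B)) partition_net"
proof -
  let ?B' = "rtrans B (- y)"
  have S: "finite {A, ?B'}" "{A, ?B'} \<subseteq> sets borel" using A rtrans_borel[OF B] by auto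
  have P0: "atoms {A, ?B'} \<in> borel_partitions" by (rule atoms_partition[OF S])
  show ?thesis
  proof (rule eventually_mono[OF eventually_refines[OF P0]])
    fix Q assume Q: "Q \<in> borel_partitions \<and> refines Q (atoms {A, ?B'})"
    have "emeasure (nu_part lam lam2 y Q) (A \<times> B) = emeasure (nu_diag lam y) (A \<times> B)"
    proof (rule nu_part_rect[OF A B])
      show "Q \<in> borel_partitions" using Q by blast
      fix E assume "E \<in> Q"
      then show "(E \<subseteq> A \<or> E \<inter> A = {}) \<and> (E \<subseteq> ?B' \<or> E \<inter> ?B' = {})"
        using refines_atoms_sub_or_disj[of Q "{A, ?B'}"] Q by blast
    qed
    then show "measure (nu_part lam lam2 y Q) (A \<times> B) = measure (nu_diag lam y) (A \<times> B)"
      by (simp add: measure_def)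
  qed
qed

end



context
  fixes lam :: "'a::{topological_group_add, t2_space} measure" and lam2 :: "('a \<times> 'a) measure" and y :: 'a
  assumes cpt: "compact (UNIV :: 'a set)" and H: "haar_prob lam" and R: "regular_product_extension lam lam2"
begin

lemma weak_conv:
  fixes f :: "'a \<times> 'a \<Rightarrow> real"
  assumes f: "continuous_on UNIV f"
  shows "((\<lambda>P. integral\<^sup>L (nu_part lam lam2 y P) f) \<longlongrightarrow> integral\<^sup>L (nu_diag lam y) f) partition_net"
proof (rule tendstoI)
  fix e :: real assume e: "0 < e"
  then have e3: "e / 3 > 0" by simp
  obtain P0 where P0: "P0 \<in> borel_partitions"
    and G: "\<And>A B p q. A \<in> P0 \<Longrightarrow> B \<in> P0 \<Longrightarrow> p \<in> A \<times> B \<Longrightarrow> q \<in> A \<times> B \<Longrightarrow> \<bar>f p - f q\<bar> < e / 3"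
    using grid_exists[OF cpt f e3] by blast
  define g where "g = gridfun f P0"
  have cpt2: "compact (UNIV :: ('a \<times> 'a) set)" using compact_Times[OF cpt cpt] by simp
  have fg0: "\<bar>f q - gridfun f P0 q\<bar> < e / 3" for q
    by (rule gridfun_close[OF P0]) (rule G; assumption)
  have fg: "\<bar>f q - g q\<bar> \<le> e / 3" for q
    using fg0[of q] unfolding g_def by simp
  have ev1: "eventually (\<lambda>Q. Q \<in> borel_partitions \<and> refines Q P0) partition_net"
    by (rule eventually_refines[OF cpt H R P0])
  have ev2: "eventually (\<lambda>Q. \<forall>AB\<in>P0 \<times> P0. measure (nu_part lam lam2 y Q) (fst AB \<times> snd AB) =
      measure (nu_diag lam y) (fst AB \<times> snd AB)) partition_net"
  proof (rule eventually_ball_finite)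
    show "finite (P0 \<times> P0)" using bp_finite[OF P0] by simp
    show "\<forall>AB\<in>P0 \<times> P0. eventually (\<lambda>Q. measure (nu_part lam lam2 y Q) (fst AB \<times> snd AB) =
      measure (nu_diag lam y) (fst AB \<times> snd AB)) partition_net"
      using bp_borel[OF P0] by (auto intro!: eventually_rect[OF cpt H R])
  qed
  show "eventually (\<lambda>Q. dist (integral\<^sup>L (nu_part lam lam2 y Q) f) (integral\<^sup>L (nu_diag lam y) f) < e) partition_net"
  proof (rule eventually_mono[OF eventually_conj[OF ev1 ev2]])
    fix Q assume Q: "(Q \<in> borel_partitions \<and> refines Q P0) \<and>
      (\<forall>AB\<in>P0 \<times> P0. measure (nu_part lam lam2 y Q) (fst AB \<times> snd AB) = measure (nu_diag lam y) (fst AB \<times> snd AB))"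
    let ?N = "nu_part lam lam2 y Q" and ?D = "nu_diag lam y"
    have pN: "prob_space ?N" using nu_part_prob[OF cpt H R] Q by blast
    have pD: "prob_space ?D" by (rule nu_diag_prob[OF cpt H R])
    have fN: "finite_measure ?N" using prob_space.finite_measure[OF pN] .
    have fD: "finite_measure ?D" using prob_space.finite_measure[OF pD] .
    have SN: "A \<times> B \<in> sets ?N" if "A \<in> P0" "B \<in> P0" for A B
      using that bp_borel[OF P0] by (simp add: nu_part_sets times_borel)
    have SD: "A \<times> B \<in> sets ?D" if "A \<in> P0" "B \<in> P0" for A B
      using that bp_borel[OF P0] by (simp add: nu_diag_sets times_borel)
    have iN: "integral\<^sup>L ?N g = (\<Sum>AB\<in>P0 \<times> P0. f (cell_pt (fst AB) (snd AB)) * measure ?N (fst AB \<times> snd AB))"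
      unfolding g_def by (rule gridfun_integral[OF fN P0 SN])
    have iD: "integral\<^sup>L ?D g = (\<Sum>AB\<in>P0 \<times> P0. f (cell_pt (fst AB) (snd AB)) * measure ?D (fst AB \<times> snd AB))"
      unfolding g_def by (rule gridfun_integral[OF fD P0 SD])
    have gg: "integral\<^sup>L ?N g = integral\<^sup>L ?D g"
      unfolding iN iD
    proof (rule sum.cong[OF refl])
      fix AB assume "AB \<in> P0 \<times> P0"
      then have "measure ?N (fst AB \<times> snd AB) = measure ?D (fst AB \<times> snd AB)" using Q by blast
      then show "f (cell_pt (fst AB) (snd AB)) * measure ?N (fst AB \<times> snd AB) =
          f (cell_pt (fst AB) (snd AB)) * measure ?D (fst AB \<times> snd AB)" by simp
    qed
    have a1: "\<bar>integral\<^sup>L ?N f - integral\<^sup>L ?N g\<bar> \<le> e / 3"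
      by (rule approx_integral[OF pN cont_integrable[OF fN nu_part_sets cpt2 f]])
         (use gridfun_integrable[OF fN SN] fg in \<open>auto simp: g_def\<close>)
    have a2: "\<bar>integral\<^sup>L ?D f - integral\<^sup>L ?D g\<bar> \<le> e / 3"
      by (rule approx_integral[OF pD cont_integrable[OF fD nu_diag_sets cpt2 f]])
         (use gridfun_integrable[OF fD SD] fg in \<open>auto simp: g_def\<close>)
    show "dist (integral\<^sup>L ?N f) (integral\<^sup>L ?D f) < e"
      using a1 a2 gg e unfolding dist_real_def by linarith
  qed
qed

end

theorem lemma3p3:
  fixes lam :: "'a::{topological_group_add, t2_space} measure"
    and lam2 :: "('a \<times> 'a) measure"
    and y :: 'a
  assumes "compact (UNIV :: 'a set)"
    and "haar_prob lam"
    and "regular_product_extension lam lam2"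
  shows "(\<forall>A\<in>sets borel. \<forall>B\<in>sets borel.
            ((\<lambda>P. measure (nu_part lam lam2 y P) (A \<times> B))
               \<longlongrightarrow> measure (nu_diag lam y) (A \<times> B)) partition_net)
       \<and> prob_space (nu_diag lam y)
       \<and> (\<forall>P\<in>borel_partitions. prob_space (nu_part lam lam2 y P))
       \<and> (\<forall>f :: 'a \<times> 'a \<Rightarrow> real. continuous_on UNIV f \<longrightarrow>
            ((\<lambda>P. integral\<^sup>L (nu_part lam lam2 y P) f)
               \<longlongrightarrow> integral\<^sup>L (nu_diag lam y) f) partition_net)"
  using tendsto_eventually[OF eventually_rect[OF assms]] nu_diag_prob[OF assms]
    nu_part_prob[OF assms] weak_conv[OF assms]
  by blast

end
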